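(* Let $(\mathcal T_0,\mathfrak c)$ be an $(N{+}1)$-colored initial triangulation in $\mathbb R^n$, let $\mathcal T\in\mathbb B$ and $M\in\mathcal T$. Then every $T\in\mathrm{Refine}(\mathcal T,M)\setminus\mathcal T$ satisfies $\ell(T)\le\ell(M)+1$.
   Context: $n\ge2$, $N\ge n$. An $(N{+}1)$-colored triangulation is a conforming triangulation $\mathcal T_0$ of a polyhedral domain in $\mathbb R^n$ with $\mathfrak c:\mathcal V(\mathcal T_0)\to\{0,\dots,N\}$ giving distinct colors to the vertices of each simplex. Each vertex $v$ has an integer generation $g(v)$, with level $\ell(v)\in\mathbb Z$ and type $t(v)\in\{1,\dots,N\}$ defined by $g(v)=N(\ell(v)-1)+t(v)$; initial vertices have $g(v)=-\mathfrak c(v)$. For an $n$-simplex $T=[v_0,\dots,v_n]$ with $g(v_0)>\dots>g(v_n)$: if $\ell(v_n)\ne\ell(v_{n-1})$ then $\mathrm{bse}(T)=[v_{n-1},v_n]$ and its midpoint has generation $g(v_{n-1})+N$; otherwise, with $j=\min\{k:\ell(v_k)=\ell(v_n)\}$, $\mathrm{bse}(T)=[v_j,v_n]$ and its midpoint has generation $g(v_n)+2N+1-t(v_j)$. Children replace one endpoint of $\mathrm{bse}(T)$ by the midpoint. The level of a simplex is $\ell(T)=\max_{v\in\mathcal V(T)}\ell(v)$. $\mathrm{Refine}(\mathcal T,T)$: with $e=\mathrm{bse}(T)$ and $\omega(e)$ the simplices of $\mathcal T$ containing edge $e$, if some $T'\in\omega(e)$ has $\mathrm{bse}(T')\ne e$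 return $\mathrm{Refine}(\mathrm{Refine}(\mathcal T,T'),T)$, else replace every simplex of $\omega(e)$ by its children. $\mathbb B$ is the set of triangulations obtained from $\mathcal T_0$ by finitely many refinements. *)

theory Defs
  imports "HOL-Analysis.Analysis"
begin

type_synonym 'n smplx = "(real^'n) set"
type_synonym 'n state = "'n smplx set \<times> ((real^'n) \<Rightarrow> int)"

definition is_nsimplex :: "'n::finite smplx \<Rightarrow> bool" where
  "is_nsimplex S \<longleftrightarrow> finite S \<and> card S = CARD('n) + 1 \<and> \<not> affine_dependent S"

definition conforming_triangulation :: "'n::finite smplx set \<Rightarrow> bool" where
  "conforming_triangulation \<T> \<longleftrightarrow>
     finite \<T> \<and> \<T> \<noteq> {} \<and> (\<forall>S\<in>\<T>. is_nsimplex S) \<and>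
     (\<forall>S\<in>\<T>. \<forall>S'\<in>\<T>. convex hull S \<inter> convex hull S' = convex hull (S \<inter> S'))"

definition polyhedral_domain_triangulation :: "'n::finite smplx set \<Rightarrow> bool" where
  "polyhedral_domain_triangulation \<T> \<longleftrightarrow>
     conforming_triangulation \<T> \<and>
     (let D = (\<Union>S\<in>\<T>. convex hull S) in
        polyhedron D \<and> connected (interior D) \<and> closure (interior D) = D)"

definition vertices :: "'n::finite smplx set \<Rightarrow> (real^'n) set" where
  "vertices \<T> = \<Union>\<T>"

definition colored_triangulation :: "nat \<Rightarrow> 'n::finite smplx set \<Rightarrow> ((real^'n) \<Rightarrow> nat) \<Rightarrow> bool" where
  "colored_triangulation N \<T>0 c \<longleftrightarrow>
     polyhedral_domain_triangulation \<T>0 \<and>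
     (\<forall>v\<in>vertices \<T>0. c v \<le> N) \<and> (\<forall>S\<in>\<T>0. inj_on c S)"

text \<open>Level and type of a vertex: g v = N (lev v - 1) + vtype v with vtype v in {1..N}.\<close>
definition lev :: "nat \<Rightarrow> ((real^'n) \<Rightarrow> int) \<Rightarrow> real^'n \<Rightarrow> int" where
  "lev N g v = (g v - 1) div int N + 1"

definition vtype :: "nat \<Rightarrow> ((real^'n) \<Rightarrow> int) \<Rightarrow> real^'n \<Rightarrow> int" where
  "vtype N g v = g v - int N * (lev N g v - 1)"

definition slev :: "nat \<Rightarrow> ((real^'n) \<Rightarrow> int) \<Rightarrow> 'n::finite smplx \<Rightarrow> int" where
  "slev N g T = Max (lev N g ` T)"

definition vlow :: "((real^'n) \<Rightarrow> int) \<Rightarrow> 'n::finite smplx \<Rightarrow> real^'n" where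
  "vlow g T = (THE v. v \<in> T \<and> (\<forall>w\<in>T. g v \<le> g w))"

definition vlow2 :: "((real^'n) \<Rightarrow> int) \<Rightarrow> 'n::finite smplx \<Rightarrow> real^'n" where
  "vlow2 g T = vlow g (T - {vlow g T})"

text \<open>v_j with j = min{k. lev v_k = lev v_n}: the vertex of largest generation among
  those having the level of v_n (vertices are ordered by decreasing generation).\<close>
definition vtop_lev :: "nat \<Rightarrow> ((real^'n) \<Rightarrow> int) \<Rightarrow> 'n::finite smplx \<Rightarrow> real^'n" where
  "vtop_lev N g T = (THE v. v \<in> T \<and> lev N g v = lev N g (vlow g T) \<and>
      (\<forall>w\<in>T. lev N g w = lev N g (vlow g T) \<longrightarrow> g w \<le> g v))"

definition bse_other :: "nat \<Rightarrow> ((real^'n) \<Rightarrow> int) \<Rightarrow> 'n::finite smplx \<Rightarrow> real^'n" where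
  "bse_other N g T = (if lev N g (vlow2 g T) \<noteq> lev N g (vlow g T) then vlow2 g T else vtop_lev N g T)"

definition bse :: "nat \<Rightarrow> ((real^'n) \<Rightarrow> int) \<Rightarrow> 'n::finite smplx \<Rightarrow> (real^'n) set" where
  "bse N g T = {bse_other N g T, vlow g T}"

definition midgen :: "nat \<Rightarrow> ((real^'n) \<Rightarrow> int) \<Rightarrow> 'n::finite smplx \<Rightarrow> int" where
  "midgen N g T = (if lev N g (vlow2 g T) \<noteq> lev N g (vlow g T)
      then g (vlow2 g T) + int N
      else g (vlow g T) + 2 * int N + 1 - vtype N g (vtop_lev N g T))"

definition bse_mid :: "nat \<Rightarrow> ((real^'n) \<Rightarrow> int) \<Rightarrow> 'n::finite smplx \<Rightarrow> real^'n" where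
  "bse_mid N g T = midpoint (bse_other N g T) (vlow g T)"

definition patch :: "'n::finite smplx set \<Rightarrow> (real^'n) set \<Rightarrow> 'n::finite smplx set" where
  "patch \<T> e = {S \<in> \<T>. e \<subseteq> S}"

definition children :: "'n::finite smplx \<Rightarrow> real^'n \<Rightarrow> real^'n \<Rightarrow> 'n::finite smplx set" where
  "children S a b = {insert (midpoint a b) (S - {a}), insert (midpoint a b) (S - {b})}"

text \<open>Refine as a relation: refine N st T st' means that Refine(st,T) can return st'.
  The state carries the generation function; the recursive call may pick any
  offending simplex of omega(e).\<close>
inductive refine :: "nat \<Rightarrow> 'n::finite state \<Rightarrow> 'n::finite smplx \<Rightarrow> 'n::finite state \<Rightarrow> bool" for N where
  recur: "\<lbrakk> S \<in> patch \<T> (bse N g T); bse N g S \<noteq> bse N g T;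
            refine N (\<T>, g) S st1; refine N st1 T st2 \<rbrakk>
          \<Longrightarrow> refine N (\<T>, g) T st2"
| bisect: "\<lbrakk> \<forall>S\<in>patch \<T> (bse N g T). bse N g S = bse N g T \<rbrakk>
          \<Longrightarrow> refine N (\<T>, g) T
                ((\<T> - patch \<T> (bse N g T)) \<union>
                   (\<Union>S\<in>patch \<T> (bse N g T). children S (bse_other N g T) (vlow g T)),
                 g(bse_mid N g T := midgen N g T))"

inductive_set BB :: "nat \<Rightarrow> 'n::finite smplx set \<Rightarrow> ((real^'n) \<Rightarrow> nat) \<Rightarrow> 'n::finite state set"
  for N \<T>0 c where
  init: "(\<T>0, \<lambda>v. - int (c v)) \<in> BB N \<T>0 c"
| step: "\<lbrakk> (\<T>, g) \<in> BB N \<T>0 c; M \<in> \<T>; refine N (\<T>, g) M st \<rbrakk> \<Longrightarrow> st \<in> BB N \<T>0 c"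

end

theory Submission
  imports Defs
begin



definition levi :: "nat \<Rightarrow> int \<Rightarrow> int" where
  "levi N x = (x - 1) div int N + 1"
definition typi :: "nat \<Rightarrow> int \<Rightarrow> int" where
  "typi N x = x - int N * (levi N x - 1)"

lemma typi_bounds:
  assumes "0 < N" shows "1 \<le> typi N x" "typi N x \<le> int N"
proof -
  have "(x - 1) mod int N \<ge> 0" "(x - 1) mod int N < int N" using assms by auto
  moreover have e: "int N * ((x - 1) div int N) + (x - 1) mod int N = x - 1" by (rule mult_div_mod_eq)
  moreover have "typi N x = x - int N * ((x - 1) div int N)" unfolding typi_def levi_def by simp
  ultimately have "1 \<le> typi N x \<and> typi N x \<le> int N" by linarith
  then show "1 \<le> typi N x" "typi N x \<le> int N" by auto
qed

lemma decomp: "x = int N * (levi N x - 1) + typi N x"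
  unfolding typi_def by simp

lemma levi_mono: "x \<le> y \<Longrightarrow> levi N x \<le> levi N y"
  unfolding levi_def by (cases "N = 0") (simp_all add: zdiv_mono1)

lemma levi_less_imp: "levi N x < levi N y \<Longrightarrow> x < y"
  using levi_mono[of y x N] by linarith

lemma levi_addN: "0 < N \<Longrightarrow> levi N (x + int N) = levi N x + 1"
proof -
  assume "0 < N"
  have "(x + int N - 1) div int N = (x - 1 + int N) div int N" by (simp add: algebra_simps)
  also have "\<dots> = (x - 1) div int N + 1" using \<open>0 < N\<close> by (simp add: div_add_self2)
  finally show ?thesis unfolding levi_def by simp
qed

lemma typi_addN: "0 < N \<Longrightarrow> typi N (x + int N) = typi N x"
  using levi_addN[of N x] unfolding typi_def by (simp add: algebra_simps)

lemma levi_of_decomp: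
  assumes "0 < N" "1 \<le> t" "t \<le> int N"
  shows "levi N (int N * (L - 1) + t) = L" "typi N (int N * (L - 1) + t) = t"
proof -
  have "(int N * (L - 1) + t - 1) div int N = (t - 1 + int N * (L - 1)) div int N"
    by (simp add: algebra_simps)
  also have "\<dots> = (t - 1) div int N + (L - 1)" using assms by simp
  also have "(t - 1) div int N = 0" using assms by (simp add: div_pos_pos_trivial)
  finally show "levi N (int N * (L - 1) + t) = L" unfolding levi_def by simp
  then show "typi N (int N * (L - 1) + t) = t" unfolding typi_def by simp
qed

lemma diff_levels:
  "y - x = int N * (levi N y - levi N x) + (typi N y - typi N x)"
  using decomp[of y N] decomp[of x N] by (simp add: algebra_simps)

lemma same_level_less:
  "levi N x = levi N y \<Longrightarrow> x < y \<longleftrightarrow> typi N x < typi N y"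
  using diff_levels[of y x N] by (simp, linarith)

lemma same_level_diff:
  "levi N x = levi N y \<Longrightarrow> y - x = typi N y - typi N x"
  using diff_levels[of y x N] by auto

lemma next_level_diff:
  "levi N y = levi N x + 1 \<Longrightarrow> y - x = int N + typi N y - typi N x"
  using diff_levels[of y x N] by auto

lemma levi_ge2:
  assumes "0 < N" "levi N y \<ge> levi N x + 2"
  shows "y - x > int N"
proof -
  have "int N * (levi N y - levi N x) \<ge> int N * 2"
    using assms by (intro mult_left_mono) auto
  then show ?thesis using diff_levels[of y x N] typi_bounds[OF assms(1), of x] typi_bounds[OF assms(1), of y]
    by linarith
qed

definition loS :: "int set \<Rightarrow> int" where "loS A = Min A"
definition lo2S :: "int set \<Rightarrow> int" where "lo2S A = Min (A - {Min A})"
definition tjS :: "nat \<Rightarrow> int set \<Rightarrow> int" where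
  "tjS N A = Max {x \<in> A. levi N x = levi N (Min A)}"
definition caseA :: "nat \<Rightarrow> int set \<Rightarrow> bool" where
  "caseA N A \<longleftrightarrow> levi N (lo2S A) \<noteq> levi N (loS A)"
definition othS :: "nat \<Rightarrow> int set \<Rightarrow> int" where
  "othS N A = (if caseA N A then lo2S A else tjS N A)"
definition muS :: "nat \<Rightarrow> int set \<Rightarrow> int" where
  "muS N A = (if caseA N A then lo2S A + int N else loS A + 2 * int N + 1 - typi N (tjS N A))"
definition etaI :: "nat \<Rightarrow> int \<Rightarrow> int \<Rightarrow> int" where
  "etaI N x y = (if levi N x \<noteq> levi N y then x + int N else y + 2 * int N + 1 - typi N x)"
definition CharI :: "nat \<Rightarrow> int set \<Rightarrow> bool" where
  "CharI N A \<longleftrightarrow>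
     (caseA N A \<longrightarrow> (\<forall>x\<in>A. x < lo2S A + int N)) \<and>
     (\<not> caseA N A \<longrightarrow> (\<forall>x\<in>A. levi N x \<le> levi N (loS A) + 1 \<and>
         (levi N x = levi N (loS A) + 1 \<longrightarrow>
            typi N x + typi N (tjS N A) - typi N (loS A) \<le> int N)))"

lemma loS_props:
  assumes "finite A" "A \<noteq> {}"
  shows "loS A \<in> A" "\<And>x. x \<in> A \<Longrightarrow> loS A \<le> x"
  using assms by (auto simp: loS_def)

lemma lo2S_props:
  assumes "finite A" "2 \<le> card A"
  shows "lo2S A \<in> A" "lo2S A \<noteq> loS A" "loS A < lo2S A"
    "\<And>x. x \<in> A \<Longrightarrow> x \<noteq> loS A \<Longrightarrow> lo2S A \<le> x"
proof -
  have ne: "A \<noteq> {}" using assms by auto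
  have "A - {Min A} \<noteq> {}"
  proof
    assume "A - {Min A} = {}"
    then have "A \<subseteq> {Min A}" by auto
    then have "card A \<le> 1" using card_mono[of "{Min A}" A] by auto
    then show False using assms by simp
  qed
  moreover have fin: "finite (A - {Min A})" using assms by simp
  ultimately have m: "Min (A - {Min A}) \<in> A - {Min A}" by (rule Min_in[rotated])
  then show "lo2S A \<in> A" "lo2S A \<noteq> loS A" unfolding lo2S_def loS_def by auto
  show "\<And>x. x \<in> A \<Longrightarrow> x \<noteq> loS A \<Longrightarrow> lo2S A \<le> x"
    unfolding lo2S_def loS_def using fin by auto
  have "loS A \<le> lo2S A" using loS_props[OF assms(1) ne] \<open>lo2S A \<in> A\<close> by auto
  then show "loS A < lo2S A" using \<open>lo2S A \<noteq> loS A\<close> by simp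
qed

lemma tjS_props:
  assumes "finite A" "A \<noteq> {}"
  shows "tjS N A \<in> A" "levi N (tjS N A) = levi N (loS A)"
    "\<And>x. x \<in> A \<Longrightarrow> levi N x = levi N (loS A) \<Longrightarrow> x \<le> tjS N A"
proof -
  let ?B = "{x \<in> A. levi N x = levi N (Min A)}"
  have "Min A \<in> ?B" using Min_in[OF assms] by auto
  then have ne: "?B \<noteq> {}" by blast
  have "finite ?B" using assms(1) by simp
  have "Max ?B \<in> ?B" by (rule Max_in[OF \<open>finite ?B\<close> ne])
  then show "tjS N A \<in> A" "levi N (tjS N A) = levi N (loS A)" unfolding tjS_def loS_def by auto
  show "\<And>x. x \<in> A \<Longrightarrow> levi N x = levi N (loS A) \<Longrightarrow> x \<le> tjS N A"
    unfolding tjS_def loS_def using \<open>finite ?B\<close> by auto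
qed

lemma loS_eq: "finite A \<Longrightarrow> x \<in> A \<Longrightarrow> (\<And>y. y \<in> A \<Longrightarrow> x \<le> y) \<Longrightarrow> loS A = x"
  unfolding loS_def by (intro Min_eqI) auto

lemma lo2S_eq: "finite A \<Longrightarrow> x \<in> A \<Longrightarrow> x \<noteq> loS A \<Longrightarrow>
   (\<And>y. y \<in> A \<Longrightarrow> y \<noteq> loS A \<Longrightarrow> x \<le> y) \<Longrightarrow> lo2S A = x"
  unfolding lo2S_def loS_def by (intro Min_eqI) auto

lemma tjS_eq: "finite A \<Longrightarrow> x \<in> A \<Longrightarrow> levi N x = levi N (loS A) \<Longrightarrow>
   (\<And>y. y \<in> A \<Longrightarrow> levi N y = levi N (loS A) \<Longrightarrow> y \<le> x) \<Longrightarrow> tjS N A = x"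
  unfolding tjS_def loS_def by (intro Max_eqI) auto

lemma caseA_facts:
  assumes "finite A" "2 \<le> card A" "0 < N" "caseA N A"
  shows "levi N (loS A) < levi N (lo2S A)" "othS N A = lo2S A" "muS N A = lo2S A + int N"
    "levi N (muS N A) = levi N (lo2S A) + 1" "typi N (muS N A) = typi N (lo2S A)"
proof -
  have "loS A < lo2S A" using lo2S_props[OF assms(1,2)] by auto
  then show "levi N (loS A) < levi N (lo2S A)" using levi_mono[of "loS A" "lo2S A" N] assms(4)
    unfolding caseA_def by simp
  show o: "othS N A = lo2S A" "muS N A = lo2S A + int N" using assms(4) unfolding othS_def muS_def by auto
  show "levi N (muS N A) = levi N (lo2S A) + 1" "typi N (muS N A) = typi N (lo2S A)"
    using o levi_addN[OF assms(3)] typi_addN[OF assms(3)] by auto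
qed

lemma caseB_facts:
  assumes "finite A" "2 \<le> card A" "0 < N" "\<not> caseA N A"
  shows "levi N (lo2S A) = levi N (loS A)" "lo2S A \<le> tjS N A" "loS A < tjS N A"
    "typi N (loS A) < typi N (tjS N A)" "othS N A = tjS N A"
    "muS N A = loS A + 2 * int N + 1 - typi N (tjS N A)"
    "levi N (muS N A) = levi N (loS A) + 1"
    "typi N (muS N A) = int N + 1 + typi N (loS A) - typi N (tjS N A)"
proof -
  have ne: "A \<noteq> {}" using assms by auto
  note l2 = lo2S_props[OF assms(1,2)]
  note tj = tjS_props[OF assms(1) ne, where N=N]
  show e: "levi N (lo2S A) = levi N (loS A)" using assms(4) unfolding caseA_def by simp
  show "lo2S A \<le> tjS N A" using tj(3)[OF l2(1) e] .
  then show lt: "loS A < tjS N A" using l2 by simp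
  show tt: "typi N (loS A) < typi N (tjS N A)" using same_level_less[OF tj(2)[symmetric]] lt by simp
  show o: "othS N A = tjS N A" "muS N A = loS A + 2 * int N + 1 - typi N (tjS N A)"
    using assms(4) unfolding othS_def muS_def by auto
  define L where "L = levi N (loS A)"
  define t where "t = int N + 1 + typi N (loS A) - typi N (tjS N A)"
  have t1: "1 \<le> t" "t \<le> int N" using tt typi_bounds[OF assms(3), of "loS A"] typi_bounds[OF assms(3), of "tjS N A"]
    unfolding t_def by linarith+
  have "muS N A = int N * (L + 1 - 1) + t"
    using o(2) decomp[of "loS A" N] unfolding L_def t_def by (simp add: algebra_simps)
  then show "levi N (muS N A) = levi N (loS A) + 1" "typi N (muS N A) = int N + 1 + typi N (loS A) - typi N (tjS N A)"
    using levi_of_decomp[OF assms(3) t1, of "L + 1"] unfolding L_def t_def by auto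
qed

lemma mu_eta:
  assumes "finite A" "2 \<le> card A" "0 < N"
  shows "muS N A = etaI N (othS N A) (loS A) \<and> loS A < othS N A \<and> othS N A \<in> A"
proof (cases "caseA N A")
  case True
  note c = caseA_facts[OF assms True]
  show ?thesis using c lo2S_props[OF assms(1,2)] unfolding etaI_def by auto
next
  case False
  have ne: "A \<noteq> {}" using assms by auto
  note c = caseB_facts[OF assms False]
  show ?thesis using c tjS_props[OF assms(1) ne, where N=N] unfolding etaI_def by auto
qed

lemma mu_level_bound:
  assumes "finite A" "2 \<le> card A" "0 < N"
  shows "\<exists>x\<in>A. levi N (muS N A) \<le> levi N x + 1"
proof (cases "caseA N A")
  case True
  then show ?thesis using caseA_facts[OF assms True] lo2S_props[OF assms(1,2)] by force
next
  case False
  then show ?thesis using caseB_facts[OF assms False] loS_props[OF assms(1)] assms by force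
qed

lemma Char_mu:
  assumes "finite A" "2 \<le> card A" "0 < N" "CharI N A" "x \<in> A"
  shows "x < muS N A" "levi N x \<le> levi N (muS N A)"
proof -
  have "x < muS N A"
  proof (cases "caseA N A")
    case True
    then show ?thesis using caseA_facts[OF assms(1-3) True] assms(4,5) unfolding CharI_def by auto
  next
    case False
    note c = caseB_facts[OF assms(1-3) False]
    have ch: "levi N x \<le> levi N (loS A) + 1"
      "levi N x = levi N (loS A) + 1 \<longrightarrow> typi N x + typi N (tjS N A) - typi N (loS A) \<le> int N"
      using False assms(4,5) unfolding CharI_def by auto
    show ?thesis
    proof (cases "levi N x = levi N (loS A) + 1")
      case True
      then have "levi N x = levi N (muS N A)" using c by simp
      moreover have "typi N x < typi N (muS N A)" using ch True c by simp
      ultimately show ?thesis using same_level_less by blast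
    next
      case False
      then have "levi N x < levi N (muS N A)" using ch c by simp
      then show ?thesis by (rule levi_less_imp)
    qed
  qed
  then show "x < muS N A" "levi N x \<le> levi N (muS N A)" using levi_mono by auto
qed

lemma Char_eta:
  assumes "finite A" "2 \<le> card A" "0 < N" "CharI N A" "x \<in> A" "y \<in> A" "y < x"
    "\<not> (x = othS N A \<and> y = loS A)"
  shows "muS N A < etaI N x y"
proof -
  have ne: "A \<noteq> {}" using assms by auto
  note l = loS_props[OF assms(1) ne]
  note l2 = lo2S_props[OF assms(1,2)]
  note tj = tjS_props[OF assms(1) ne, where N=N]
  note tb = typi_bounds[OF assms(3)]
  have xl: "x \<noteq> loS A" using l(2)[OF assms(6)] assms(7) by auto
  show ?thesis
  proof (cases "caseA N A")
    case True
    note c = caseA_facts[OF assms(1-3) True]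
    show ?thesis
    proof (cases "levi N x = levi N y")
      case False
      have "lo2S A < x"
      proof (rule ccontr)
        assume "\<not> lo2S A < x"
        then have "x = lo2S A" using l2(4)[OF assms(5) xl] by simp
        moreover have "y = loS A" using l2(4)[OF assms(6)] assms(7) \<open>x = lo2S A\<close> by force
        ultimately show False using assms(8) c(2) by simp
      qed
      then show ?thesis using False c(3) unfolding etaI_def by simp
    next
      case True
      have "y \<noteq> loS A"
      proof
        assume "y = loS A"
        have "lo2S A \<le> x" using l2(4)[OF assms(5) xl] .
        then have "levi N (lo2S A) \<le> levi N x" by (rule levi_mono)
        then show False using True \<open>y = loS A\<close> c(1) by simp
      qed
      then have "lo2S A \<le> y" using l2(4)[OF assms(6)] by simp
      then show ?thesis using True c(3) tb[of x] unfolding etaI_def by simp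
    qed
  next
    case False
    note c = caseB_facts[OF assms(1-3) False]
    have chx: "levi N x \<le> levi N (loS A) + 1"
      "levi N x = levi N (loS A) + 1 \<longrightarrow> typi N x + typi N (tjS N A) - typi N (loS A) \<le> int N"
      using False assms(4,5) unfolding CharI_def by auto
    have chy: "levi N y \<le> levi N (loS A) + 1"
      using False assms(4,6) unfolding CharI_def by auto
    have ly: "levi N (loS A) \<le> levi N y" using levi_mono l(2)[OF assms(6)] by blast
    have lxy: "levi N y \<le> levi N x" using levi_mono assms(7) by simp
    show ?thesis
    proof (cases "levi N x = levi N y")
      case False
      then have xL: "levi N x = levi N (loS A) + 1" using chx(1) ly lxy by simp
      have "x - loS A = int N + typi N x - typi N (loS A)" using next_level_diff[OF xL] .
      then show ?thesis using False c(6) c(4) tb[of x] unfolding etaI_def by simp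
    next
      case True
      have eta: "etaI N x y = y + 2 * int N + 1 - typi N x" using True unfolding etaI_def by simp
      show ?thesis
      proof (cases "levi N y = levi N (loS A)")
        case True
        have xL: "levi N x = levi N (loS A)" using True \<open>levi N x = levi N y\<close> by simp
        have d: "y - loS A = typi N y - typi N (loS A)" using same_level_diff[where x="loS A" and y=y and N=N] True by simp
        have x_le: "x \<le> tjS N A" using tj(3)[OF assms(5) xL] .
        have tx: "typi N x \<le> typi N (tjS N A)"
          using x_le same_level_less[where x=x and y="tjS N A" and N=N] xL tj(2) by force
        have ty: "typi N (loS A) \<le> typi N y" using d l(2)[OF assms(6)] by simp
        have "typi N x < typi N (tjS N A) \<or> typi N (loS A) < typi N y"
        proof (rule ccontr)
          assume "\<not> ?thesis"
          then have "typi N x = typi N (tjS N A)" "typi N (loS A) = typi N y" using tx ty by auto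
          then have "x = tjS N A" "y = loS A" using decomp[of x N] decomp[of "tjS N A" N]
              decomp[of y N] decomp[of "loS A" N] xL tj(2) True by metis+
          then show False using assms(8) c(5) by simp
        qed
        then show ?thesis using eta c(6) d tx ty by linarith
      next
        case False
        then have yL: "levi N y = levi N (loS A) + 1" using chy ly by simp
        have d: "y - loS A = int N + typi N y - typi N (loS A)" using next_level_diff[OF yL] .
        show ?thesis using eta c(6) c(4) d tb[of x] tb[of y] by linarith
      qed
    qed
  qed
qed

lemma third_elem:
  assumes "finite A" "3 \<le> card A"
  obtains l3 where "l3 \<in> A" "l3 \<noteq> loS A" "l3 \<noteq> lo2S A"
    "\<And>z. z \<in> A \<Longrightarrow> z \<noteq> loS A \<Longrightarrow> z \<noteq> lo2S A \<Longrightarrow> l3 \<le> z"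
proof -
  let ?C = "A - {loS A, lo2S A}"
  have "card ?C \<ge> 1"
  proof -
    have "card ?C \<ge> card A - card {loS A, lo2S A}" by (rule diff_card_le_card_Diff) simp
    moreover have "card {loS A, lo2S A} \<le> 2" by (simp add: card_insert_le_m1)
    ultimately show ?thesis using assms(2) by linarith
  qed
  then have "?C \<noteq> {}" by (metis card.empty not_one_le_zero)
  moreover have "finite ?C" using assms(1) by simp
  ultimately have "Min ?C \<in> ?C" by (intro Min_in)
  then show ?thesis using that[of "Min ?C"] \<open>finite ?C\<close> by auto
qed

lemma card2_sub: "finite B \<Longrightarrow> a \<in> B \<Longrightarrow> b \<in> B \<Longrightarrow> a \<noteq> b \<Longrightarrow> 2 \<le> card B"
  using card_mono[of B "{a, b}"] by auto

lemma Char_child_oth: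
  assumes "finite A" "3 \<le> card A" "0 < N" "CharI N A"
  shows "CharI N (insert (muS N A) (A - {othS N A}))"
proof -
  have A2: "2 \<le> card A" using assms by simp
  have ne: "A \<noteq> {}" using assms by auto
  note l = loS_props[OF assms(1) ne]
  note l2 = lo2S_props[OF assms(1) A2]
  note tj = tjS_props[OF assms(1) ne, where N=N]
  note tb = typi_bounds[OF assms(3)]
  note cm = Char_mu[OF assms(1) A2 assms(3,4)]
  let ?B = "insert (muS N A) (A - {othS N A})"
  have finB: "finite ?B" using assms(1) by simp
  obtain l3 where l3: "l3 \<in> A" "l3 \<noteq> loS A" "l3 \<noteq> lo2S A"
    "\<And>z. z \<in> A \<Longrightarrow> z \<noteq> loS A \<Longrightarrow> z \<noteq> lo2S A \<Longrightarrow> l3 \<le> z"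
    using third_elem[OF assms(1,2)] by blast
  have l23: "lo2S A < l3" using l2(4)[OF l3(1,2)] l3(3) by simp
  show ?thesis
  proof (cases "caseA N A")
    case True
    note c = caseA_facts[OF assms(1) A2 assms(3) True]
    have loB: "loS ?B = loS A"
      by (rule loS_eq[OF finB]) (use l l2 c cm in auto)
    have lo2B: "lo2S ?B = l3"
      by (rule lo2S_eq[OF finB]) (use loB l3 l2 c cm(1)[OF l3(1)] in auto)
    have "levi N (lo2S A) \<le> levi N l3" using l23 levi_mono by simp
    then have cB: "caseA N ?B" using c(1) loB lo2B unfolding caseA_def by simp
    have "\<forall>x\<in>A. x < lo2S A + int N" using True assms(4) unfolding CharI_def by auto
    then show ?thesis using cB lo2B c l23 unfolding CharI_def by auto
  next
    case False
    note c = caseB_facts[OF assms(1) A2 assms(3) False]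
    have ch: "\<And>x. x \<in> A \<Longrightarrow> levi N x \<le> levi N (loS A) + 1"
      "\<And>x. x \<in> A \<Longrightarrow> levi N x = levi N (loS A) + 1 \<Longrightarrow>
          typi N x + typi N (tjS N A) - typi N (loS A) \<le> int N"
      using False assms(4) unfolding CharI_def by auto
    have loB: "loS ?B = loS A"
      by (rule loS_eq[OF finB]) (use l c cm(1)[OF l(1)] in auto)
    have B2: "2 \<le> card ?B" using card2_sub[OF finB, of "loS A" "muS N A"] l(1) c cm[of "loS A"] by auto
    note l2B = lo2S_props[OF finB B2]
    have lev_mu: "levi N (muS N A) = levi N (loS A) + 1" using c by simp
    show ?thesis
    proof (cases "caseA N ?B")
      case True
      have up: "levi N y = levi N (loS A) + 1" if "y \<in> ?B" "y \<noteq> loS A" for y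
      proof -
        have "lo2S ?B \<le> y" using l2B(4)[OF that(1)] that(2) loB by simp
        then have "levi N (lo2S ?B) \<le> levi N y" by (rule levi_mono)
        moreover have "levi N (loS A) \<le> levi N (lo2S ?B)" using l2B(3) loB levi_mono by fastforce
        moreover have "levi N (lo2S ?B) \<noteq> levi N (loS A)" using True loB unfolding caseA_def by simp
        moreover have "levi N y \<le> levi N (loS A) + 1" using that ch(1) lev_mu by auto
        ultimately show ?thesis by linarith
      qed
      have "x < lo2S ?B + int N" if "x \<in> ?B" for x
      proof (cases "x = loS A")
        case True
        then show ?thesis using l2B(3) loB by simp
      next
        case False
        have "lo2S ?B \<noteq> loS A" using l2B(2) loB by simp
        then have "levi N (lo2S ?B) = levi N x" using up[OF that False] up[OF l2B(1)] by simp
        then show ?thesis using same_level_diff[where x="lo2S ?B" and y=x and N=N] tb[of x] tb[of "lo2S ?B"] by linarith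
      qed
      then show ?thesis using True unfolding CharI_def by auto
    next
      case cBn: False
      have Bne: "?B \<noteq> {}" by simp
      note tjB = tjS_props[OF finB Bne, where N=N]
      have t'A: "tjS N ?B \<in> A" "tjS N ?B \<noteq> tjS N A" using tjB(1,2) loB lev_mu c(5) by auto
      have "tjS N ?B \<le> tjS N A" using tj(3)[OF t'A(1)] tjB(2) loB by simp
      then have t't: "typi N (tjS N ?B) < typi N (tjS N A)"
        using t'A(2) same_level_less[where x="tjS N ?B" and y="tjS N A" and N=N] tjB(2) tj(2) loB by simp
      have "levi N x \<le> levi N (loS ?B) + 1 \<and> (levi N x = levi N (loS ?B) + 1 \<longrightarrow>
            typi N x + typi N (tjS N ?B) - typi N (loS ?B) \<le> int N)" if "x \<in> ?B" for x
      proof (cases "x = muS N A")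
        case True
        then show ?thesis using loB lev_mu c(8) t't by simp
      next
        case False
        then have "x \<in> A" using that by simp
        then show ?thesis using ch[of x] loB t't by fastforce
      qed
      then show ?thesis using cBn unfolding CharI_def by blast
    qed
  qed
qed

lemma Char_child_lo:
  assumes "finite A" "3 \<le> card A" "0 < N" "CharI N A"
  shows "CharI N (insert (muS N A) (A - {loS A}))"
proof -
  have A2: "2 \<le> card A" using assms by simp
  have ne: "A \<noteq> {}" using assms by auto
  note l = loS_props[OF assms(1) ne]
  note l2 = lo2S_props[OF assms(1) A2]
  note tj = tjS_props[OF assms(1) ne, where N=N]
  note tb = typi_bounds[OF assms(3)]
  note cm = Char_mu[OF assms(1) A2 assms(3,4)]
  let ?B = "insert (muS N A) (A - {loS A})"
  have finB: "finite ?B" using assms(1) by simp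
  obtain l3 where l3: "l3 \<in> A" "l3 \<noteq> loS A" "l3 \<noteq> lo2S A"
    "\<And>z. z \<in> A \<Longrightarrow> z \<noteq> loS A \<Longrightarrow> z \<noteq> lo2S A \<Longrightarrow> l3 \<le> z"
    using third_elem[OF assms(1,2)] by blast
  have l23: "lo2S A < l3" using l2(4)[OF l3(1,2)] l3(3) by simp
  have loB: "loS ?B = lo2S A"
    by (rule loS_eq[OF finB]) (use l2 cm(1)[OF l2(1)] in auto)
  have B2: "2 \<le> card ?B" using card2_sub[OF finB, of "lo2S A" "muS N A"] l2 cm(1)[OF l2(1)] by auto
  note l2B = lo2S_props[OF finB B2]
  show ?thesis
  proof (cases "caseA N A")
    case True
    note c = caseA_facts[OF assms(1) A2 assms(3) True]
    have chA: "\<And>x. x \<in> A \<Longrightarrow> x < lo2S A + int N" using True assms(4) unfolding CharI_def by auto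
    have lo2B: "lo2S ?B = l3"
      by (rule lo2S_eq[OF finB]) (use loB l3 l2 c cm(1)[OF l3(1)] in auto)
    show ?thesis
    proof (cases "caseA N ?B")
      case True
      have "\<forall>x\<in>?B. x < l3 + int N"
      proof
        fix x assume "x \<in> ?B"
        then have "x = muS N A \<or> x \<in> A" by auto
        then show "x < l3 + int N" using c(3) chA l23 by fastforce
      qed
      then show ?thesis using True lo2B unfolding CharI_def by simp
    next
      case cBn: False
      have Bne: "?B \<noteq> {}" by simp
      note tjB = tjS_props[OF finB Bne, where N=N]
      have "levi N x \<le> levi N (loS ?B) + 1 \<and> (levi N x = levi N (loS ?B) + 1 \<longrightarrow>
            typi N x + typi N (tjS N ?B) - typi N (loS ?B) \<le> int N)" if "x \<in> ?B" for x
      proof (cases "x = muS N A")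
        case True
        then show ?thesis using loB c tb[of "tjS N ?B"] by simp
      next
        case False
        then have xA: "x \<in> A" using that by simp
        have lt: "x < lo2S A + int N" using chA[OF xA] .
        then have "levi N x \<le> levi N (lo2S A) + 1" using levi_mono[of x "lo2S A + int N" N] c(4) c(3) by simp
        moreover have "typi N x < typi N (lo2S A)" if "levi N x = levi N (lo2S A) + 1"
          using lt same_level_less[where x=x and y="lo2S A + int N" and N=N] that c(3-5)
          using levi_addN[OF assms(3)] typi_addN[OF assms(3)] by simp
        ultimately show ?thesis using loB tb[of "tjS N ?B"] by fastforce
      qed
      then show ?thesis using cBn unfolding CharI_def by blast
    qed
  next
    case False
    note c = caseB_facts[OF assms(1) A2 assms(3) False]
    have ch: "\<And>x. x \<in> A \<Longrightarrow> levi N x \<le> levi N (loS A) + 1"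
      "\<And>x. x \<in> A \<Longrightarrow> levi N x = levi N (loS A) + 1 \<Longrightarrow>
          typi N x + typi N (tjS N A) - typi N (loS A) \<le> int N"
      using False assms(4) unfolding CharI_def by auto
    have lev_mu: "levi N (muS N A) = levi N (loS A) + 1" using c by simp
    have ll2: "levi N (lo2S A) = levi N (loS A)" using c(1) .
    show ?thesis
    proof (cases "caseA N ?B")
      case True
      have up: "levi N y = levi N (loS A) + 1" if "y \<in> ?B" "y \<noteq> lo2S A" for y
      proof -
        have "lo2S ?B \<le> y" using l2B(4)[OF that(1)] that(2) loB by simp
        then have "levi N (lo2S ?B) \<le> levi N y" by (rule levi_mono)
        moreover have "levi N (lo2S A) \<le> levi N (lo2S ?B)" using l2B(3) loB levi_mono by fastforce
        moreover have "levi N (lo2S ?B) \<noteq> levi N (lo2S A)" using True loB unfolding caseA_def by simp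
        moreover have "levi N y \<le> levi N (loS A) + 1" using that ch(1) lev_mu by auto
        ultimately show ?thesis using ll2 by linarith
      qed
      have "x < lo2S ?B + int N" if "x \<in> ?B" for x
      proof (cases "x = lo2S A")
        case True
        then show ?thesis using l2B(3) loB by simp
      next
        case False
        have "lo2S ?B \<noteq> lo2S A" using l2B(2) loB by simp
        then have "levi N (lo2S ?B) = levi N x" using up[OF that False] up[OF l2B(1)] by simp
        then show ?thesis using same_level_diff[where x="lo2S ?B" and y=x and N=N] tb[of x] tb[of "lo2S ?B"] by linarith
      qed
      then show ?thesis using True unfolding CharI_def by auto
    next
      case cBn: False
      have tjB: "tjS N ?B = tjS N A"
      proof (rule tjS_eq[OF finB])
        show "tjS N A \<in> ?B" using tj(1) c(3) by auto
        show "levi N (tjS N A) = levi N (loS ?B)" using tj(2) loB ll2 by simp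
        show "y \<le> tjS N A" if "y \<in> ?B" "levi N y = levi N (loS ?B)" for y
          using that tj(3)[of y] loB ll2 lev_mu by auto
      qed
      have tl2: "typi N (loS A) < typi N (lo2S A)"
        using same_level_less[where x="loS A" and y="lo2S A" and N=N] ll2 l2(3) by simp
      have "levi N x \<le> levi N (loS ?B) + 1 \<and> (levi N x = levi N (loS ?B) + 1 \<longrightarrow>
            typi N x + typi N (tjS N ?B) - typi N (loS ?B) \<le> int N)" if "x \<in> ?B" for x
      proof (cases "x = muS N A")
        case True
        then show ?thesis using loB lev_mu c(8) tjB ll2 tl2 by simp
      next
        case False
        then have "x \<in> A" using that by simp
        then show ?thesis using ch[of x] loB tjB ll2 tl2 by fastforce
      qed
      then show ?thesis using cBn unfolding CharI_def by blast
    qed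
  qed
qed

lemma levi_init:
  assumes "0 < N" "- int N < x" "x \<le> 0"
  shows "levi N x = 0"
  using levi_of_decomp(1)[OF assms(1), of "x + int N" 0] assms by simp

lemma levi_minusN: "0 < N \<Longrightarrow> levi N (- int N) = -1"
  using levi_of_decomp(1)[of N "int N" "-1"] by simp

lemma Char_init:
  assumes "finite A" "2 \<le> card A" "0 < N" "\<And>x. x \<in> A \<Longrightarrow> - int N \<le> x \<and> x \<le> 0"
  shows "CharI N A"
proof -
  have ne: "A \<noteq> {}" using assms by auto
  note l = loS_props[OF assms(1) ne]
  note l2 = lo2S_props[OF assms(1,2)]
  have "\<forall>x\<in>A. x < lo2S A + int N"
  proof
    fix x assume "x \<in> A"
    then show "x < lo2S A + int N" using assms(4)[of x] assms(4)[OF l(1)] l2(3) by linarith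
  qed
  moreover have "levi N x \<le> levi N (loS A) + 1 \<and> levi N x \<noteq> levi N (loS A) + 1"
    if "\<not> caseA N A" "x \<in> A" for x
  proof -
    have "loS A \<noteq> - int N"
    proof
      assume "loS A = - int N"
      then have "levi N (loS A) = -1" using levi_minusN[OF assms(3)] by simp
      moreover have "levi N (lo2S A) = 0" using levi_init[OF assms(3)] assms(4)[OF l2(1)] l2(3) \<open>loS A = - int N\<close> by simp
      ultimately show False using that(1) unfolding caseA_def by simp
    qed
    then have "- int N < loS A" using assms(4)[OF l(1)] by simp
    then have "levi N x = 0" "levi N (loS A) = 0"
      using levi_init[OF assms(3)] assms(4) l(1) l(2)[OF that(2)] that(2) by force+
    then show ?thesis by simp
  qed
  ultimately show ?thesis unfolding CharI_def by auto
qed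



lemma mid_in_hull2: "midpoint a b \<in> convex hull {a, b}"
  using midpoint_in_closed_segment[of a b] segment_convex_hull by metis

lemma vert_in_hull:
  fixes S :: "'a::euclidean_space set"
  assumes "\<not> affine_dependent S" "G \<subseteq> S" "v \<in> S" "v \<in> convex hull G"
  shows "v \<in> G"
proof (rule ccontr)
  assume "v \<notin> G"
  have "\<not> affine_dependent ({v} \<union> G)" using assms affine_dependent_subset[of "{v} \<union> G" S] by auto
  then have "convex hull ({v} \<inter> G) = convex hull {v} \<inter> convex hull G" by (rule convex_hull_Int)
  moreover have "{v} \<inter> G = {}" using \<open>v \<notin> G\<close> by blast
  ultimately have "convex hull {v} \<inter> convex hull G = {}" by simp
  moreover have "v \<in> convex hull {v}" by (simp add: hull_inc)
  ultimately show False using assms(4) by blast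
qed

lemma mid_in_hull:
  fixes S :: "'a::euclidean_space set"
  assumes "\<not> affine_dependent S" "G \<subseteq> S" "a \<in> S" "b \<in> S" "a \<noteq> b"
    "midpoint a b \<in> convex hull G"
  shows "a \<in> G" "b \<in> G"
proof -
  have "\<not> affine_dependent ({a, b} \<union> G)" using assms affine_dependent_subset[of "{a, b} \<union> G" S] by auto
  then have "convex hull ({a, b} \<inter> G) = convex hull {a, b} \<inter> convex hull G" by (rule convex_hull_Int)
  then have m: "midpoint a b \<in> convex hull ({a, b} \<inter> G)" using mid_in_hull2 assms(6) by auto
  have "a \<in> G \<and> b \<in> G"
  proof (rule ccontr)
    assume "\<not> (a \<in> G \<and> b \<in> G)"
    then have "{a, b} \<inter> G = {} \<or> {a, b} \<inter> G = {a} \<or> {a, b} \<inter> G = {b}" by blast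
    moreover have "{a, b} \<inter> G \<noteq> {}" using m by (metis convex_hull_empty empty_iff)
    moreover have "{a, b} \<inter> G \<noteq> {a}"
    proof
      assume "{a, b} \<inter> G = {a}"
      then have "midpoint a b = a" using m by simp
      then show False using assms(5) by simp
    qed
    moreover have "{a, b} \<inter> G \<noteq> {b}"
    proof
      assume "{a, b} \<inter> G = {b}"
      then have "midpoint a b = b" using m by simp
      then show False using assms(5) by simp
    qed
    ultimately show False by blast
  qed
  then show "a \<in> G" "b \<in> G" by auto
qed

lemma mid_notin:
  fixes S :: "'a::euclidean_space set"
  assumes "\<not> affine_dependent S" "a \<in> S" "b \<in> S" "a \<noteq> b"
  shows "midpoint a b \<notin> S"
proof
  assume "midpoint a b \<in> S"
  then have "midpoint a b \<in> convex hull {midpoint a b}" by simp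
  then have "a \<in> {midpoint a b}" "b \<in> {midpoint a b}"
    using mid_in_hull[OF assms(1) _ assms(2,3,4), of "{midpoint a b}"] \<open>midpoint a b \<in> S\<close> by auto
  then show False using assms(4) by simp
qed

lemma child_hull_sub:
  fixes S :: "'a::euclidean_space set"
  assumes "a \<in> S" "b \<in> S"
  shows "convex hull (insert (midpoint a b) (S - {p})) \<subseteq> convex hull S"
proof (rule hull_minimal)
  have "convex hull {a, b} \<subseteq> convex hull S" using assms by (intro hull_mono) auto
  then show "insert (midpoint a b) (S - {p}) \<subseteq> convex hull S"
    using mid_in_hull2[of a b] hull_subset[of S convex] by auto
qed (rule convex_convex_hull)

lemma child_indep:
  fixes S :: "'a::euclidean_space set"
  assumes "\<not> affine_dependent S" "a \<in> S" "b \<in> S" "a \<noteq> b" "p = a \<or> p = b"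
  shows "\<not> affine_dependent (insert (midpoint a b) (S - {p}))"
    "card (insert (midpoint a b) (S - {p})) = card S"
proof -
  let ?m = "midpoint a b"
  let ?C = "insert ?m (S - {p})"
  have fin: "finite S" using aff_independent_finite[OF assms(1)] .
  have mS: "?m \<notin> S" using mid_notin[OF assms(1-4)] .
  have "card S > 0" using fin assms(2) card_gt_0_iff by blast
  then show cardC: "card ?C = card S" using mS fin assms(2,3,5) by (auto simp: card_insert_if)
  have "?m \<in> affine hull S"
    using child_hull_sub[OF assms(2,3), of p] convex_hull_subset_affine_hull hull_subset[of ?C convex] by blast
  then have C1: "?C \<subseteq> affine hull S" using hull_subset[of S affine] by auto
  define q where "q = (if p = a then b else a)"
  have q: "p + q = a + b" "q \<in> S - {p}" using assms(2-5) unfolding q_def by auto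
  have pm: "p = 2 *\<^sub>R ?m + (-1) *\<^sub>R q"
  proof -
    have "2 *\<^sub>R ?m = a + b" unfolding midpoint_def by simp
    then show ?thesis using q(1) by (simp add: algebra_simps)
  qed
  have "p \<in> affine hull ?C"
  proof -
    have "2 *\<^sub>R ?m + (-1) *\<^sub>R q \<in> affine hull ?C"
      using mem_affine[OF affine_affine_hull, of ?m ?C q 2 "-1"] hull_subset[of ?C affine] q(2) by auto
    then show ?thesis using pm by simp
  qed
  then have "S \<subseteq> affine hull ?C" using hull_subset[of ?C affine] by auto
  then have h1: "affine hull S \<subseteq> affine hull ?C"
    using hull_minimal[of S "affine hull ?C" affine] affine_affine_hull by blast
  have h2: "affine hull ?C \<subseteq> affine hull S"
    using hull_minimal[of ?C "affine hull S" affine] affine_affine_hull C1 by blast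
  have "affine hull S = affine hull ?C" using h1 h2 by (rule subset_antisym)
  then have "aff_dim ?C = aff_dim S" using aff_dim_affine_hull[of S] aff_dim_affine_hull[of ?C] by simp
  moreover have "aff_dim S = int (card S) - 1" using assms(1) affine_independent_iff_card by blast
  moreover have "finite ?C" using fin by simp
  ultimately show "\<not> affine_dependent ?C" using cardC by (simp add: affine_independent_iff_card)
qed

lemma face_lemma:
  fixes S :: "'a::euclidean_space set"
  assumes "\<not> affine_dependent S" "\<not> affine_dependent C" "convex hull C \<subseteq> convex hull S" "G \<subseteq> S"
  shows "convex hull C \<inter> convex hull G \<subseteq> convex hull (C \<inter> convex hull G)"
proof -
  have "convex hull G face_of convex hull S"
    using face_of_convex_hull_affine_independent[OF assms(1)] assms(4) by blast
  then have "convex hull G \<inter> convex hull C face_of convex hull S \<inter> convex hull C"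
    by (rule face_of_slice) (rule convex_convex_hull)
  then have f: "convex hull G \<inter> convex hull C face_of convex hull C"
    using assms(3) by (simp add: Int_absorb1)
  then obtain c where c: "c \<subseteq> C" "convex hull G \<inter> convex hull C = convex hull c"
    using face_of_convex_hull_affine_independent[OF assms(2)] by blast
  have "c \<subseteq> convex hull c" by (rule hull_subset)
  then have "c \<subseteq> C \<inter> convex hull G" using c by auto
  then have "convex hull c \<subseteq> convex hull (C \<inter> convex hull G)" by (rule hull_mono)
  then show ?thesis using c by auto
qed

lemma two_children:
  fixes D :: "'a::euclidean_space set"
  assumes "\<not> affine_dependent (insert b D)" "b \<notin> D" "m \<in> D" "a = 2 *\<^sub>R m - b"
    "x \<in> convex hull (insert b D)" "x \<in> convex hull (insert a D)"
  shows "x \<in> convex hull D"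
proof -
  have Dne: "D \<noteq> {}" using assms(3) by auto
  obtain t u d where tu: "t \<ge> 0" "u \<ge> 0" "t + u = 1" "d \<in> convex hull D" "x = t *\<^sub>R b + u *\<^sub>R d"
    using assms(5) convex_hull_insert[OF Dne, of b] by auto
  obtain s w d' where sw: "s \<ge> 0" "w \<ge> 0" "s + w = 1" "d' \<in> convex hull D" "x = s *\<^sub>R a + w *\<^sub>R d'"
    using assms(6) convex_hull_insert[OF Dne, of a] by auto
  have "t + s = 0"
  proof (rule ccontr)
    assume ne: "t + s \<noteq> 0"
    have eq: "(t + s) *\<^sub>R b = (2 * s) *\<^sub>R m + w *\<^sub>R d' + (- u) *\<^sub>R d"
      using tu(5) sw(5) assms(4) by (simp add: algebra_simps)
    have "b = (2 * s / (t + s)) *\<^sub>R m + (w / (t + s)) *\<^sub>R d' + (- u / (t + s)) *\<^sub>R d"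
    proof -
      have "b = (1 / (t + s)) *\<^sub>R ((t + s) *\<^sub>R b)" using ne by simp
      also have "\<dots> = (1 / (t + s)) *\<^sub>R ((2 * s) *\<^sub>R m + w *\<^sub>R d' + (- u) *\<^sub>R d)" using eq by simp
      also have "\<dots> = (2 * s / (t + s)) *\<^sub>R m + (w / (t + s)) *\<^sub>R d' + (- u / (t + s)) *\<^sub>R d"
        by (simp add: algebra_simps)
      finally show ?thesis .
    qed
    moreover have "2 * s / (t + s) + w / (t + s) + - u / (t + s) = 1"
    proof -
      have "2 * s / (t + s) + w / (t + s) + - u / (t + s) = (2 * s + w - u) / (t + s)"
        by (simp add: add_divide_distrib diff_divide_distrib)
      also have "2 * s + w - u = t + s" using tu(3) sw(3) by simp
      finally show ?thesis using ne by simp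
    qed
    moreover have "m \<in> affine hull D" "d \<in> affine hull D" "d' \<in> affine hull D"
      using assms(3) hull_subset[of D affine] tu(4) sw(4) convex_hull_subset_affine_hull by blast+
    ultimately have "b \<in> affine hull D"
      using mem_affine_3[OF affine_affine_hull, of m D d' d "2 * s / (t + s)" "w / (t + s)" "- u / (t + s)"]
      by simp
    moreover have "insert b D - {b} = D" using assms(2) by auto
    ultimately have "affine_dependent (insert b D)"
      unfolding affine_dependent_def by (intro bexI[of _ b]) auto
    then show False using assms(1) by simp
  qed
  then have "t = 0" using tu(1) sw(1) by simp
  then show ?thesis using tu by simp
qed

lemma conf_child_old:
  fixes S :: "'a::euclidean_space set"
  assumes iS: "\<not> affine_dependent S" and iY: "\<not> affine_dependent Y"
    and cSY: "convex hull S \<inter> convex hull Y \<subseteq> convex hull (S \<inter> Y)"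
    and ab: "a \<in> S" "b \<in> S" "a \<noteq> b" "p = a \<or> p = b"
    and nY: "\<not> (a \<in> Y \<and> b \<in> Y)"
  shows "convex hull (insert (midpoint a b) (S - {p})) \<inter> convex hull Y
     \<subseteq> convex hull (insert (midpoint a b) (S - {p}) \<inter> Y)"
proof -
  let ?X = "insert (midpoint a b) (S - {p})"
  let ?G = "S \<inter> Y"
  have iX: "\<not> affine_dependent ?X" using child_indep(1)[OF iS ab] .
  have sub: "convex hull ?X \<subseteq> convex hull S" using child_hull_sub[OF ab(1,2)] .
  have "convex hull ?X \<inter> convex hull Y \<subseteq> convex hull ?X \<inter> convex hull ?G" using sub cSY by blast
  also have "\<dots> \<subseteq> convex hull (?X \<inter> convex hull ?G)" by (rule face_lemma[OF iS iX sub]) blast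
  also have "?X \<inter> convex hull ?G \<subseteq> ?X \<inter> Y"
  proof
    fix v assume v: "v \<in> ?X \<inter> convex hull ?G"
    show "v \<in> ?X \<inter> Y"
    proof (cases "v = midpoint a b")
      case True
      then have "a \<in> ?G" "b \<in> ?G" using mid_in_hull[OF iS _ ab(1-3), of ?G] v by auto
      then show ?thesis using nY by blast
    next
      case False
      then have "v \<in> S" using v by blast
      then have "v \<in> ?G" using vert_in_hull[OF iS, of ?G v] v by blast
      then show ?thesis using v by blast
    qed
  qed
  then have "convex hull (?X \<inter> convex hull ?G) \<subseteq> convex hull (?X \<inter> Y)" by (rule hull_mono)
  finally show ?thesis .
qed

lemma conf_child_child:
  fixes S1 :: "'a::euclidean_space set"
  assumes i1: "\<not> affine_dependent S1" and i2: "\<not> affine_dependent S2"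
    and c12: "convex hull S1 \<inter> convex hull S2 \<subseteq> convex hull (S1 \<inter> S2)"
    and ab1: "a \<in> S1" "b \<in> S1" and ab2: "a \<in> S2" "b \<in> S2" and ab: "a \<noteq> b"
    and p1: "p1 = a \<or> p1 = b" and p2: "p2 = a \<or> p2 = b"
  shows "convex hull (insert (midpoint a b) (S1 - {p1})) \<inter> convex hull (insert (midpoint a b) (S2 - {p2}))
     \<subseteq> convex hull (insert (midpoint a b) (S1 - {p1}) \<inter> insert (midpoint a b) (S2 - {p2}))"
proof
  let ?m = "midpoint a b"
  let ?X = "insert ?m (S1 - {p1})"
  let ?Y = "insert ?m (S2 - {p2})"
  let ?G = "S1 \<inter> S2"
  fix x assume x: "x \<in> convex hull ?X \<inter> convex hull ?Y"
  have iX: "\<not> affine_dependent ?X" using child_indep(1)[OF i1 ab1 ab p1] .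
  have iY: "\<not> affine_dependent ?Y" using child_indep(1)[OF i2 ab2 ab p2] .
  have sX: "convex hull ?X \<subseteq> convex hull S1" using child_hull_sub[OF ab1] .
  have sY: "convex hull ?Y \<subseteq> convex hull S2" using child_hull_sub[OF ab2] .
  have xG: "x \<in> convex hull ?G" using x sX sY c12 by blast
  have x1: "x \<in> convex hull (?X \<inter> convex hull ?G)"
    using face_lemma[OF i1 iX sX, of ?G] x xG by blast
  have x2: "x \<in> convex hull (?Y \<inter> convex hull ?G)"
    using face_lemma[OF i2 iY sY, of ?G] x xG by blast
  have m1: "?m \<notin> S1" using mid_notin[OF i1 ab1 ab] .
  have m2: "?m \<notin> S2" using mid_notin[OF i2 ab2 ab] .
  have "?X \<inter> convex hull ?G \<subseteq> insert ?m (?G - {p1})"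
    using vert_in_hull[OF i1, of ?G] by blast
  then have y1: "x \<in> convex hull (insert ?m (?G - {p1}))" using x1 hull_mono by blast
  have "?Y \<inter> convex hull ?G \<subseteq> insert ?m (?G - {p2})"
    using vert_in_hull[OF i2, of ?G] by blast
  then have y2: "x \<in> convex hull (insert ?m (?G - {p2}))" using x2 hull_mono by blast
  show "x \<in> convex hull (?X \<inter> ?Y)"
  proof (cases "p1 = p2")
    case True
    have "insert ?m (?G - {p1}) \<subseteq> ?X \<inter> ?Y" using True by blast
    then show ?thesis using y1 hull_mono by blast
  next
    case False
    let ?D = "insert ?m (?G - {a, b})"
    have D: "?D \<subseteq> ?X \<inter> ?Y" using p1 p2 by blast
    have mid2: "2 *\<^sub>R ?m = a + b" unfolding midpoint_def by simp
    have "x \<in> convex hull ?D"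
    proof (cases "p1 = a")
      case True
      then have p2b: "p2 = b" using False p2 by simp
      have e1: "insert ?m (?G - {p1}) = insert b ?D" using True ab ab1 ab2 by blast
      have e2: "insert ?m (?G - {p2}) = insert a ?D" using p2b ab ab1 ab2 by blast
      have "insert b ?D \<subseteq> ?X" using True ab1 ab by blast
      then have "\<not> affine_dependent (insert b ?D)"
        using iX affine_dependent_subset[of "insert b ?D" ?X] by blast
      moreover have "b \<notin> ?D" using m1 ab1 by auto
      moreover have "a = 2 *\<^sub>R ?m - b" using mid2 by (simp add: algebra_simps)
      ultimately show ?thesis using two_children[of b ?D ?m a x] y1 y2 e1 e2 by simp
    next
      case False
      then have p1b: "p1 = b" "p2 = a" using p1 p2 \<open>p1 \<noteq> p2\<close> by auto
      have e1: "insert ?m (?G - {p1}) = insert a ?D" using p1b ab ab1 ab2 by blast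
      have e2: "insert ?m (?G - {p2}) = insert b ?D" using p1b ab ab1 ab2 by blast
      have "insert a ?D \<subseteq> ?X" using p1b ab1 ab by blast
      then have "\<not> affine_dependent (insert a ?D)"
        using iX affine_dependent_subset[of "insert a ?D" ?X] by blast
      moreover have "a \<notin> ?D" using m1 ab1 by auto
      moreover have "b = 2 *\<^sub>R ?m - a" using mid2 by (simp add: algebra_simps)
      ultimately show ?thesis using two_children[of a ?D ?m b x] y1 y2 e1 e2 by simp
    qed
    then show ?thesis using D hull_mono by blast
  qed
qed




lemma lev_levi: "lev N g v = levi N (g v)"
  unfolding lev_def levi_def by simp

lemma vtype_typi: "vtype N g v = typi N (g v)"
  unfolding vtype_def typi_def lev_def levi_def by simp

lemma vlow_props:
  assumes "finite T" "T \<noteq> {}" "inj_on g T"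
  shows "vlow g T \<in> T" "g (vlow g T) = loS (g ` T)"
proof -
  have "finite (g ` T)" "g ` T \<noteq> {}" using assms by auto
  then have "Min (g ` T) \<in> g ` T" by (rule Min_in)
  then obtain v where v: "v \<in> T" "g v = Min (g ` T)" by auto
  have P: "v \<in> T \<and> (\<forall>w\<in>T. g v \<le> g w)" using v assms(1) by auto
  have "vlow g T = v" unfolding vlow_def
  proof (rule the_equality)
    show "v \<in> T \<and> (\<forall>w\<in>T. g v \<le> g w)" using P .
    fix u assume u: "u \<in> T \<and> (\<forall>w\<in>T. g u \<le> g w)"
    then have "g u = g v" using P by (meson order_antisym)
    then show "u = v" using u v(1) assms(3) by (meson inj_onD)
  qed
  then show "vlow g T \<in> T" "g (vlow g T) = loS (g ` T)" using v unfolding loS_def by auto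
qed

lemma vlow2_props:
  assumes "finite T" "2 \<le> card T" "inj_on g T"
  shows "vlow2 g T \<in> T" "vlow2 g T \<noteq> vlow g T" "g (vlow2 g T) = lo2S (g ` T)"
proof -
  have ne: "T \<noteq> {}" using assms by auto
  note v = vlow_props[OF assms(1) ne assms(3)]
  let ?U = "T - {vlow g T}"
  have "card ?U \<ge> 1" using assms(1,2) v(1) by (simp add: card_Diff_singleton)
  then have Une: "?U \<noteq> {}" by (metis card.empty not_one_le_zero)
  have inU: "inj_on g ?U" using assms(3) by (rule inj_on_subset) blast
  note w = vlow_props[OF _ Une inU]
  have "g ` ?U = g ` T - {g (vlow g T)}" using assms(3) v(1) by (auto simp: inj_on_def)
  then show "vlow2 g T \<in> T" "vlow2 g T \<noteq> vlow g T" "g (vlow2 g T) = lo2S (g ` T)"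
    using w assms(1) v(2) unfolding vlow2_def lo2S_def loS_def by auto
qed

lemma vtop_props:
  assumes "finite T" "T \<noteq> {}" "inj_on g T"
  shows "vtop_lev N g T \<in> T" "g (vtop_lev N g T) = tjS N (g ` T)"
proof -
  note v = vlow_props[OF assms]
  have fin: "finite (g ` T)" "g ` T \<noteq> {}" using assms by auto
  note tj = tjS_props[OF fin, where N=N]
  obtain u where u: "u \<in> T" "g u = tjS N (g ` T)" using tj(1) by auto
  have P: "u \<in> T \<and> lev N g u = lev N g (vlow g T) \<and>
      (\<forall>w\<in>T. lev N g w = lev N g (vlow g T) \<longrightarrow> g w \<le> g u)"
    using u tj v unfolding lev_levi by auto
  have "vtop_lev N g T = u" unfolding vtop_lev_def
  proof (rule the_equality)
    show "u \<in> T \<and> lev N g u = lev N g (vlow g T) \<and>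
      (\<forall>w\<in>T. lev N g w = lev N g (vlow g T) \<longrightarrow> g w \<le> g u)" using P .
    fix z assume z: "z \<in> T \<and> lev N g z = lev N g (vlow g T) \<and>
      (\<forall>w\<in>T. lev N g w = lev N g (vlow g T) \<longrightarrow> g w \<le> g z)"
    then have "g z = g u" using P by (meson order_antisym)
    then show "z = u" using z u(1) assms(3) by (meson inj_onD)
  qed
  then show "vtop_lev N g T \<in> T" "g (vtop_lev N g T) = tjS N (g ` T)" using u by auto
qed

lemma bse_other_props:
  assumes "finite T" "2 \<le> card T" "inj_on g T"
  shows "bse_other N g T \<in> T" "g (bse_other N g T) = othS N (g ` T)"
    "midgen N g T = muS N (g ` T)"
proof -
  have ne: "T \<noteq> {}" using assms by auto
  note v = vlow_props[OF assms(1) ne assms(3)]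
  note v2 = vlow2_props[OF assms]
  note vt = vtop_props[OF assms(1) ne assms(3), where N=N]
  have cA: "caseA N (g ` T) \<longleftrightarrow> lev N g (vlow2 g T) \<noteq> lev N g (vlow g T)"
    unfolding caseA_def lev_levi using v v2 by simp
  show "bse_other N g T \<in> T" "g (bse_other N g T) = othS N (g ` T)"
    unfolding bse_other_def othS_def using cA v v2 vt by auto
  show "midgen N g T = muS N (g ` T)"
    unfolding midgen_def muS_def vtype_typi using cA v v2 vt by auto
qed

lemma pt_facts:
  assumes "finite T" "2 \<le> card T" "inj_on g T" "0 < N"
  shows "bse_other N g T \<in> T" "vlow g T \<in> T" "g (vlow g T) < g (bse_other N g T)"
    "midgen N g T = etaI N (g (bse_other N g T)) (g (vlow g T))"
    "bse_other N g T \<noteq> vlow g T"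
    "g (bse_other N g T) = othS N (g ` T)" "g (vlow g T) = loS (g ` T)"
    "midgen N g T = muS N (g ` T)"
proof -
  have ne: "T \<noteq> {}" using assms by auto
  note v = vlow_props[OF assms(1) ne assms(3)]
  note b = bse_other_props[OF assms(1-3), where N=N]
  have fin: "finite (g ` T)" "2 \<le> card (g ` T)" using assms by (auto simp: card_image)
  note me = mu_eta[OF fin assms(4)]
  show "bse_other N g T \<in> T" "vlow g T \<in> T" "g (vlow g T) < g (bse_other N g T)"
    "midgen N g T = etaI N (g (bse_other N g T)) (g (vlow g T))"
    "g (bse_other N g T) = othS N (g ` T)" "g (vlow g T) = loS (g ` T)"
    "midgen N g T = muS N (g ` T)"
    using v b me by auto
  then show "bse_other N g T \<noteq> vlow g T" by auto
qed




definition goodS :: "nat \<Rightarrow> 'n::finite smplx set \<Rightarrow> ((real^'n) \<Rightarrow> int) \<Rightarrow> bool" where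
  "goodS N \<T> g \<longleftrightarrow>
     (\<forall>S\<in>\<T>. finite S \<and> 3 \<le> card S \<and> \<not> affine_dependent S \<and> inj_on g S \<and> CharI N (g ` S)) \<and>
     (\<forall>S\<in>\<T>. \<forall>S'\<in>\<T>. convex hull S \<inter> convex hull S' \<subseteq> convex hull (S \<inter> S'))"

definition eabove :: "nat \<Rightarrow> ((real^'n) \<Rightarrow> int) \<Rightarrow> 'n::finite smplx \<Rightarrow> int \<Rightarrow> bool" where
  "eabove N g X B \<longleftrightarrow> (\<forall>x\<in>X. \<forall>y\<in>X. g y < g x \<longrightarrow> B < etaI N (g x) (g y))"

lemma goodS_simplex:
  assumes "goodS N \<T> g" "S \<in> \<T>"
  shows "finite S" "3 \<le> card S" "2 \<le> card S" "\<not> affine_dependent S" "inj_on g S" "CharI N (g ` S)"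
    "finite (g ` S)" "3 \<le> card (g ` S)" "2 \<le> card (g ` S)"
  using assms unfolding goodS_def by (auto simp: card_image)

lemma midgen_rec:
  assumes good: "goodS N \<T> g" and N: "0 < N" and T: "T \<in> \<T>" and S: "S \<in> \<T>"
    and sub: "bse N g T \<subseteq> S" and ne: "bse N g S \<noteq> bse N g T"
  shows "midgen N g S < midgen N g T"
proof -
  note gT = goodS_simplex[OF good T]
  note gS = goodS_simplex[OF good S]
  note pT = pt_facts[OF gT(1,3,5) N]
  note pS = pt_facts[OF gS(1,3,5) N]
  let ?a = "bse_other N g T" and ?b = "vlow g T"
  have abS: "?a \<in> S" "?b \<in> S" using sub unfolding bse_def by auto
  have "\<not> (g ?a = othS N (g ` S) \<and> g ?b = loS (g ` S))"
  proof
    assume h: "g ?a = othS N (g ` S) \<and> g ?b = loS (g ` S)"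
    then have "?a = bse_other N g S" "?b = vlow g S"
      using pS(1,2,6,7) abS gS(5) by (metis inj_onD)+
    then show False using ne unfolding bse_def by simp
  qed
  then have "muS N (g ` S) < etaI N (g ?a) (g ?b)"
    using Char_eta[OF gS(7,9) N gS(6)] abS pT(3) by blast
  then show ?thesis using pS(8) pT(4) by simp
qed

lemma eabove_T:
  assumes good: "goodS N \<T> g" and N: "0 < N" and T: "T \<in> \<T>" and B: "B < midgen N g T"
  shows "eabove N g T B"
  unfolding eabove_def
proof (intro ballI impI)
  fix x y assume xy: "x \<in> T" "y \<in> T" "g y < g x"
  note gT = goodS_simplex[OF good T]
  note pT = pt_facts[OF gT(1,3,5) N]
  note me = mu_eta[OF gT(7,9) N]
  show "B < etaI N (g x) (g y)"
  proof (cases "g x = othS N (g ` T) \<and> g y = loS (g ` T)")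
    case True
    then show ?thesis using me B pT(8) by simp
  next
    case False
    then have "muS N (g ` T) < etaI N (g x) (g y)"
      using Char_eta[OF gT(7,9) N gT(6)] xy by blast
    then show ?thesis using B pT(8) by simp
  qed
qed

lemma not_eabove_patch:
  assumes "finite T" "2 \<le> card T" "inj_on g T" "0 < N" "bse N g T \<subseteq> X"
  shows "\<not> eabove N g X (midgen N g T)"
proof -
  note pT = pt_facts[OF assms(1-4)]
  have "bse_other N g T \<in> X" "vlow g T \<in> X" using assms(5) unfolding bse_def by auto
  then show ?thesis unfolding eabove_def using pT(3,4) by force
qed

lemma eabove_mono: "eabove N g X B \<Longrightarrow> B' \<le> B \<Longrightarrow> eabove N g X B'"
  unfolding eabove_def by force

lemma eabove_cong: "eabove N g X B \<Longrightarrow> (\<forall>v\<in>X. g1 v = g v) \<Longrightarrow> eabove N g1 X B"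
  unfolding eabove_def by simp

lemma midgen_cong:
  assumes "finite T" "2 \<le> card T" "inj_on g T" "\<forall>v\<in>T. g1 v = g v"
  shows "midgen N g1 T = midgen N g T"
proof -
  have "inj_on g1 T" using assms(3,4) by (simp add: inj_on_def)
  moreover have "g1 ` T = g ` T" using assms(4) by (simp add: image_def)
  ultimately show ?thesis using bse_other_props(3)[OF assms(1-3)] bse_other_props(3)[OF assms(1,2)] by metis
qed

lemma slev_cong:
  assumes "\<forall>v\<in>C. g1 v = g v"
  shows "slev N g1 C = slev N g C"
proof -
  have "lev N g1 ` C = lev N g ` C" using assms unfolding lev_levi by (simp add: image_def)
  then show ?thesis unfolding slev_def by simp
qed

lemma bisect_step:
  assumes good: "goodS N \<T> g" and N: "0 < N" and T: "T \<in> \<T>"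
    and allb: "\<forall>S\<in>patch \<T> (bse N g T). bse N g S = bse N g T"
    and T'def: "\<T>' = (\<T> - patch \<T> (bse N g T)) \<union>
                   (\<Union>S\<in>patch \<T> (bse N g T). children S (bse_other N g T) (vlow g T))"
    and g'def: "g' = g(bse_mid N g T := midgen N g T)"
  shows "goodS N \<T>' g' \<and> \<Union>\<T> \<subseteq> \<Union>\<T>' \<and> (\<forall>v\<in>\<Union>\<T>. g' v = g v) \<and>
    (\<forall>X\<in>\<T>. eabove N g X (midgen N g T) \<longrightarrow> X \<in> \<T>') \<and>
    (\<forall>C\<in>\<T>' - \<T>. slev N g' C \<le> levi N (midgen N g T))"
proof -
  note gT = goodS_simplex[OF good T]
  note pT = pt_facts[OF gT(1,3,5) N]
  define a where "a = bse_other N g T"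
  define b where "b = vlow g T"
  define m where "m = midpoint a b"
  define \<mu> where "\<mu> = midgen N g T"
  define W where "W = patch \<T> (bse N g T)"
  have ab: "a \<in> T" "b \<in> T" "g b < g a" "a \<noteq> b" "\<mu> = etaI N (g a) (g b)"
    using pT unfolding a_def b_def \<mu>_def by auto
  have mdef: "bse_mid N g T = m" unfolding bse_mid_def m_def a_def b_def by simp
  have W: "W = {S \<in> \<T>. a \<in> S \<and> b \<in> S}" unfolding W_def patch_def bse_def a_def b_def by auto
  have conf: "\<forall>S\<in>\<T>. \<forall>S'\<in>\<T>. convex hull S \<inter> convex hull S' \<subseteq> convex hull (S \<inter> S')"
    using good unfolding goodS_def by blast
  have Wfacts: "bse_other N g S = a \<and> vlow g S = b \<and> othS N (g ` S) = g a \<and> loS (g ` S) = g b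
      \<and> muS N (g ` S) = \<mu>" if "S \<in> W" for S
  proof -
    have S: "S \<in> \<T>" using that W by auto
    note gS = goodS_simplex[OF good S]
    note pS = pt_facts[OF gS(1,3,5) N]
    have "{bse_other N g S, vlow g S} = {a, b}"
      using allb that unfolding W_def bse_def a_def b_def by auto
    then have "bse_other N g S = a \<and> vlow g S = b \<or> bse_other N g S = b \<and> vlow g S = a"
      by (auto simp: doubleton_eq_iff)
    then have e: "bse_other N g S = a" "vlow g S = b" using pS(3) ab(3) by auto
    have "othS N (g ` S) = g a" "loS (g ` S) = g b" using pS(6,7) e by simp_all
    moreover have "muS N (g ` S) = \<mu>" using pS(4,8) e ab(5) by simp
    ultimately show ?thesis using e by blast
  qed
  have fresh: "m \<notin> \<Union>\<T>"
  proof
    assume "m \<in> \<Union>\<T>"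
    then obtain Y where Y: "Y \<in> \<T>" "m \<in> Y" by auto
    note gY = goodS_simplex[OF good Y(1)]
    have "m \<in> convex hull T"
      using child_hull_sub[OF ab(1,2), of a] hull_subset[of "insert m (T - {a})" convex]
      unfolding m_def by blast
    moreover have "m \<in> convex hull Y" using Y(2) hull_subset[of Y convex] by blast
    ultimately have "m \<in> convex hull (T \<inter> Y)" using conf T Y(1) by blast
    then have "a \<in> T \<inter> Y" "b \<in> T \<inter> Y" using mid_in_hull[OF gT(4) _ ab(1,2,4), of "T \<inter> Y"]
      unfolding m_def by blast+
    then have "m \<notin> Y" using mid_notin[OF gY(4), of a b] ab(4) unfolding m_def by auto
    then show False using Y(2) by simp
  qed
  have g'eq: "g' v = g v" if "v \<in> \<Union>\<T>" for v
    using that fresh unfolding g'def mdef by auto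
  have g'm: "g' m = \<mu>" unfolding g'def mdef \<mu>_def by simp
  have T'eq: "\<T>' = (\<T> - W) \<union> (\<Union>S\<in>W. {insert m (S - {a}), insert m (S - {b})})"
    unfolding T'def W_def children_def m_def a_def b_def by simp
  have child: "finite C \<and> 3 \<le> card C \<and> \<not> affine_dependent C \<and> inj_on g' C \<and> CharI N (g' ` C)
      \<and> (\<forall>v\<in>C. levi N (g' v) \<le> levi N \<mu>) \<and> C \<noteq> {}"
    if S: "S \<in> W" and p: "p = a \<or> p = b" and C: "C = insert m (S - {p})" for S p C
  proof -
    have ST: "S \<in> \<T>" "a \<in> S" "b \<in> S" using S W by auto
    note gS = goodS_simplex[OF good ST(1)]
    note wf = Wfacts[OF S]
    note ci = child_indep[OF gS(4) ST(2,3) ab(4) p]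
    have mS: "m \<notin> S" using fresh ST(1) by auto
    have g'S: "\<forall>v\<in>S. g' v = g v" using g'eq ST(1) by auto
    have muA: "\<forall>x\<in>g ` S. x < \<mu>" "\<forall>x\<in>g ` S. levi N x \<le> levi N \<mu>"
      using Char_mu[OF gS(7,9) N gS(6)] wf by auto
    have img: "g' ` C = insert \<mu> (g ` S - {g p})"
    proof -
      have "g' ` (S - {p}) = g ` (S - {p})" using g'S by (simp add: image_def)
      also have "\<dots> = g ` S - {g p}" using gS(5) p ST by (auto simp: inj_on_def)
      finally show ?thesis using C g'm by simp
    qed
    have inj: "inj_on g' C"
    proof -
      have "inj_on g' (S - {p})" using gS(5) g'S by (simp add: inj_on_def)
      moreover have "g' m \<notin> g' ` (S - {p})" using g'S muA(1) g'm by auto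
      ultimately show ?thesis using C by auto
    qed
    have ch: "CharI N (g' ` C)"
    proof (cases "p = a")
      case True
      then show ?thesis using img Char_child_oth[OF gS(7,8) N gS(6)] wf by simp
    next
      case False
      then have "p = b" using p by simp
      then show ?thesis using img Char_child_lo[OF gS(7,8) N gS(6)] wf by simp
    qed
    have lv: "\<forall>v\<in>C. levi N (g' v) \<le> levi N \<mu>" using C g'm g'S muA(2) by auto
    have Cm: "C = insert (midpoint a b) (S - {p})" using C m_def by simp
    have "finite C" using Cm gS(1) by simp
    moreover have "3 \<le> card C" using ci(2) Cm gS(2) by simp
    moreover have "\<not> affine_dependent C" using ci(1) Cm by simp
    moreover have "C \<noteq> {}" using Cm by simp
    ultimately show ?thesis using inj ch lv by blast
  qed
  have goodT': "goodS N \<T>' g'"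
    unfolding goodS_def
  proof (rule conjI)
   show "\<forall>X\<in>\<T>'. finite X \<and> 3 \<le> card X \<and> \<not> affine_dependent X \<and> inj_on g' X \<and> CharI N (g' ` X)"
   proof
    fix X assume X: "X \<in> \<T>'"
    show "finite X \<and> 3 \<le> card X \<and> \<not> affine_dependent X \<and> inj_on g' X \<and> CharI N (g' ` X)"
    proof (cases "X \<in> \<T> - W")
      case True
      then have XT: "X \<in> \<T>" by blast
      note gX = goodS_simplex[OF good XT]
      have g'X: "\<forall>v\<in>X. g' v = g v" using g'eq XT by blast
      then have "g' ` X = g ` X" by (simp add: image_def)
      moreover have "inj_on g' X" using gX(5) g'X by (simp add: inj_on_def)
      ultimately show ?thesis using gX(1,2,4,6) by simp
    next
      case False
      have "X \<in> (\<Union>S\<in>W. {insert m (S - {a}), insert m (S - {b})})" using X False T'eq by blast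
      then obtain S where S: "S \<in> W" "X = insert m (S - {a}) \<or> X = insert m (S - {b})" by blast
      show ?thesis
      proof (cases "X = insert m (S - {a})")
        case True
        have "p = a \<or> p = b" if "p = a" for p using that by simp
        then show ?thesis using child[OF S(1), of a X] True by blast
      next
        case False
        then have "X = insert m (S - {b})" using S(2) by blast
        then show ?thesis using child[OF S(1), of b X] by blast
      qed
    qed
   qed
  next
   show "\<forall>X\<in>\<T>'. \<forall>Y\<in>\<T>'. convex hull X \<inter> convex hull Y \<subseteq> convex hull (X \<inter> Y)"
   proof (intro ballI)
    fix X Y assume X: "X \<in> \<T>'" and Y: "Y \<in> \<T>'"
    have oldY: "\<not> (a \<in> Y \<and> b \<in> Y)" if "Y \<in> \<T> - W" for Y using that W by auto
    have indep: "\<not> affine_dependent Z" if "Z \<in> \<T>" for Z using good that unfolding goodS_def by blast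
    show "convex hull X \<inter> convex hull Y \<subseteq> convex hull (X \<inter> Y)"
    proof (cases "X \<in> \<T> - W")
      case Xo: True
      show ?thesis
      proof (cases "Y \<in> \<T> - W")
        case True
        then show ?thesis using Xo conf by blast
      next
        case False
        then obtain S p where S: "S \<in> W" "p = a \<or> p = b" "Y = insert m (S - {p})" using Y T'eq by auto
        have ST: "S \<in> \<T>" "a \<in> S" "b \<in> S" using S W by auto
        have "convex hull Y \<inter> convex hull X \<subseteq> convex hull (Y \<inter> X)"
          using conf_child_old[OF indep[OF ST(1)] indep[of X], of a b p] Xo ST conf ab(4) S(2,3) oldY[OF Xo]
          unfolding m_def by blast
        then show ?thesis by (simp add: Int_commute)
      qed
    next
      case Xn: False
      then obtain S p where S: "S \<in> W" "p = a \<or> p = b" "X = insert m (S - {p})" using X T'eq by auto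
      have ST: "S \<in> \<T>" "a \<in> S" "b \<in> S" using S W by auto
      show ?thesis
      proof (cases "Y \<in> \<T> - W")
        case True
        then show ?thesis
          using conf_child_old[OF indep[OF ST(1)] indep[of Y], of a b p] ST conf ab(4) S(2,3) oldY[OF True]
          unfolding m_def by blast
      next
        case False
        then obtain S2 p2 where S2: "S2 \<in> W" "p2 = a \<or> p2 = b" "Y = insert m (S2 - {p2})" using Y T'eq by auto
        have ST2: "S2 \<in> \<T>" "a \<in> S2" "b \<in> S2" using S2 W by auto
        show ?thesis
          using conf_child_child[OF indep[OF ST(1)] indep[OF ST2(1)] _ ST(2,3) ST2(2,3) ab(4) S(2) S2(2)]
            conf ST(1) ST2(1) S(3) S2(3) unfolding m_def by blast
      qed
    qed
   qed
  qed
  have verts: "\<Union>\<T> \<subseteq> \<Union>\<T>'"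
  proof
    fix v assume "v \<in> \<Union>\<T>"
    then obtain X where X: "X \<in> \<T>" "v \<in> X" by auto
    show "v \<in> \<Union>\<T>'"
    proof (cases "X \<in> W")
      case False
      then show ?thesis using X T'eq by auto
    next
      case True
      show ?thesis
      proof (cases "v = a")
        case False
        then have "v \<in> insert m (X - {a})" using X by auto
        then show ?thesis using True T'eq by blast
      next
        case True
        then have "v \<in> insert m (X - {b})" using X ab(4) by auto
        then show ?thesis using \<open>X \<in> W\<close> T'eq by blast
      qed
    qed
  qed
  have surv: "\<forall>X\<in>\<T>. eabove N g X \<mu> \<longrightarrow> X \<in> \<T>'"
  proof (intro ballI impI)
    fix X assume X: "X \<in> \<T>" "eabove N g X \<mu>"
    have "X \<notin> W"
    proof
      assume "X \<in> W"
      then have "bse N g T \<subseteq> X" unfolding W_def patch_def by auto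
      then show False using not_eabove_patch[OF gT(1,3,5) N] X(2) unfolding \<mu>_def by blast
    qed
    then show "X \<in> \<T>'" using X T'eq by auto
  qed
  have lvl: "\<forall>C\<in>\<T>' - \<T>. slev N g' C \<le> levi N \<mu>"
  proof
    fix C assume C: "C \<in> \<T>' - \<T>"
    then obtain S p where S: "S \<in> W" "p = a \<or> p = b" "C = insert m (S - {p})" using T'eq by auto
    note cc = child[OF S]
    have "finite (lev N g' ` C)" "lev N g' ` C \<noteq> {}" using cc by auto
    then show "slev N g' C \<le> levi N \<mu>" unfolding slev_def using cc by (auto simp: lev_levi)
  qed
  show ?thesis using goodT' verts g'eq surv lvl unfolding \<mu>_def by blast
qed




lemma refine_main:
  assumes "refine N st T st'" "0 < N"
  shows "goodS N (fst st) (snd st) \<Longrightarrow> T \<in> fst st \<Longrightarrow>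
    goodS N (fst st') (snd st') \<and> \<Union>(fst st) \<subseteq> \<Union>(fst st') \<and> (\<forall>v\<in>\<Union>(fst st). snd st' v = snd st v) \<and>
    (\<forall>X\<in>fst st. eabove N (snd st) X (midgen N (snd st) T) \<longrightarrow> X \<in> fst st') \<and>
    (\<forall>C\<in>fst st' - fst st. slev N (snd st') C \<le> levi N (midgen N (snd st) T))"
  using assms(1)
proof (induction rule: refine.induct)
  case (recur S \<T> g T st1 st2)
  obtain \<T>1 g1 where st1: "st1 = (\<T>1, g1)" by (cases st1)
  obtain \<T>2 g2 where st2: "st2 = (\<T>2, g2)" by (cases st2)
  have good: "goodS N \<T> g" and T: "T \<in> \<T>" using recur.prems by auto
  have S: "S \<in> \<T>" "bse N g T \<subseteq> S" using recur.hyps(1) unfolding patch_def by auto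
  have lt: "midgen N g S < midgen N g T" using midgen_rec[OF good assms(2) T S recur.hyps(2)] .
  have IH1: "goodS N \<T>1 g1 \<and> \<Union>\<T> \<subseteq> \<Union>\<T>1 \<and> (\<forall>v\<in>\<Union>\<T>. g1 v = g v) \<and>
    (\<forall>X\<in>\<T>. eabove N g X (midgen N g S) \<longrightarrow> X \<in> \<T>1) \<and>
    (\<forall>C\<in>\<T>1 - \<T>. slev N g1 C \<le> levi N (midgen N g S))"
    using recur.IH(1) good S(1) st1 by simp
  have TT1: "T \<in> \<T>1" using IH1 eabove_T[OF good assms(2) T lt] T by blast
  have IH2: "goodS N \<T>2 g2 \<and> \<Union>\<T>1 \<subseteq> \<Union>\<T>2 \<and> (\<forall>v\<in>\<Union>\<T>1. g2 v = g1 v) \<and>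
    (\<forall>X\<in>\<T>1. eabove N g1 X (midgen N g1 T) \<longrightarrow> X \<in> \<T>2) \<and>
    (\<forall>C\<in>\<T>2 - \<T>1. slev N g2 C \<le> levi N (midgen N g1 T))"
    using recur.IH(2) IH1 TT1 st1 st2 by simp
  note gT = goodS_simplex[OF good T]
  have agT: "\<forall>v\<in>T. g1 v = g v" using IH1 T by blast
  have mT: "midgen N g1 T = midgen N g T" using midgen_cong[OF gT(1,3,5) agT] .
  have "goodS N \<T>2 g2" using IH2 by blast
  moreover have "\<Union>\<T> \<subseteq> \<Union>\<T>2" using IH1 IH2 by blast
  moreover have "\<forall>v\<in>\<Union>\<T>. g2 v = g v"
  proof
    fix v assume v: "v \<in> \<Union>\<T>"
    have h1: "\<Union>\<T> \<subseteq> \<Union>\<T>1" "\<forall>v\<in>\<Union>\<T>. g1 v = g v" using IH1 by blast+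
    have h2: "\<forall>v\<in>\<Union>\<T>1. g2 v = g1 v" using IH2 by blast
    have "v \<in> \<Union>\<T>1" using h1(1) v by blast
    then have "g2 v = g1 v" using h2 by blast
    moreover have "g1 v = g v" using h1(2) v by blast
    ultimately show "g2 v = g v" by simp
  qed
  moreover have "\<forall>X\<in>\<T>. eabove N g X (midgen N g T) \<longrightarrow> X \<in> \<T>2"
  proof (intro ballI impI)
    fix X assume X: "X \<in> \<T>" "eabove N g X (midgen N g T)"
    have "eabove N g X (midgen N g S)" using eabove_mono[OF X(2)] lt by simp
    then have X1: "X \<in> \<T>1" using IH1 X(1) by blast
    have "\<forall>v\<in>X. g1 v = g v" using IH1 X(1) by blast
    then have "eabove N g1 X (midgen N g1 T)" using eabove_cong[OF X(2)] mT by simp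
    then show "X \<in> \<T>2" using IH2 X1 by blast
  qed
  moreover have "\<forall>C\<in>\<T>2 - \<T>. slev N g2 C \<le> levi N (midgen N g T)"
  proof
    fix C assume C: "C \<in> \<T>2 - \<T>"
    show "slev N g2 C \<le> levi N (midgen N g T)"
    proof (cases "C \<in> \<T>1")
      case False
      then show ?thesis using IH2 C mT by auto
    next
      case True
      then have "slev N g1 C \<le> levi N (midgen N g S)" using IH1 C by blast
      moreover have "levi N (midgen N g S) \<le> levi N (midgen N g T)" using lt levi_mono by simp
      moreover have "\<forall>v\<in>C. g2 v = g1 v" using IH2 True by blast
      ultimately show ?thesis using slev_cong[of C g2 g1 N] by simp
    qed
  qed
  ultimately show ?case using st2 by simp
next
  case (bisect \<T> g T)
  have good: "goodS N \<T> g" and T: "T \<in> \<T>" using bisect.prems by auto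
  show ?case unfolding fst_conv snd_conv by (rule bisect_step[OF good assms(2) T bisect.hyps refl refl])
qed

lemma init_good:
  fixes \<T>0 :: "'n::finite smplx set"
  assumes card: "CARD('n) \<ge> 2" and N: "0 < N" and col: "colored_triangulation N \<T>0 c"
  shows "goodS N \<T>0 (\<lambda>v. - int (c v))"
proof -
  have ct: "conforming_triangulation \<T>0" using col
    unfolding colored_triangulation_def polyhedral_domain_triangulation_def by simp
  have cb: "\<forall>v\<in>\<Union>\<T>0. c v \<le> N" "\<forall>S\<in>\<T>0. inj_on c S"
    using col unfolding colored_triangulation_def vertices_def by auto
  have simp: "finite S \<and> card S = CARD('n) + 1 \<and> \<not> affine_dependent S" if "S \<in> \<T>0" for S
    using ct that unfolding conforming_triangulation_def is_nsimplex_def by blast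
  have conf: "\<forall>S\<in>\<T>0. \<forall>S'\<in>\<T>0. convex hull S \<inter> convex hull S' \<subseteq> convex hull (S \<inter> S')"
    using ct unfolding conforming_triangulation_def by blast
  have "finite S \<and> 3 \<le> card S \<and> \<not> affine_dependent S \<and> inj_on (\<lambda>v. - int (c v)) S
        \<and> CharI N ((\<lambda>v. - int (c v)) ` S)" if S: "S \<in> \<T>0" for S
  proof -
    have s: "finite S" "card S = CARD('n) + 1" "\<not> affine_dependent S" using simp[OF S] by auto
    have inj: "inj_on (\<lambda>v. - int (c v)) S" using cb(2) S by (simp add: inj_on_def)
    have c3: "3 \<le> card S" using s(2) card by simp
    have "card ((\<lambda>v. - int (c v)) ` S) = card S" using inj by (rule card_image)
    then have "2 \<le> card ((\<lambda>v. - int (c v)) ` S)" using c3 by simp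
    moreover have "\<And>x. x \<in> (\<lambda>v. - int (c v)) ` S \<Longrightarrow> - int N \<le> x \<and> x \<le> 0"
      using cb(1) S by force
    ultimately have "CharI N ((\<lambda>v. - int (c v)) ` S)"
      using Char_init[OF _ _ N] s(1) by blast
    then show ?thesis using s inj c3 by blast
  qed
  then show ?thesis unfolding goodS_def using conf by blast
qed

lemma BB_good:
  fixes \<T>0 :: "'n::finite smplx set"
  assumes "st \<in> BB N \<T>0 c" "CARD('n) \<ge> 2" "0 < N" "colored_triangulation N \<T>0 c"
  shows "goodS N (fst st) (snd st)"
  using assms(1)
proof (induction rule: BB.induct)
  case init
  then show ?case using init_good[OF assms(2-4)] by simp
next
  case (step \<T> g M st)
  then show ?case using refine_main[OF step.hyps(3) assms(3)] by simp
qed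

theorem corollary3p10:
  fixes \<T>0 :: "'n::finite smplx set" and c :: "real^'n \<Rightarrow> nat" and N :: nat
    and \<T> :: "'n smplx set" and g :: "real^'n \<Rightarrow> int" and M :: "'n smplx"
  assumes "CARD('n) \<ge> 2" and "N \<ge> CARD('n)"
    and "colored_triangulation N \<T>0 c"
    and "(\<T>, g) \<in> BB N \<T>0 c"
    and "M \<in> \<T>"
    and "refine N (\<T>, g) M (\<T>', g')"
    and "T \<in> \<T>' - \<T>"
  shows "slev N g' T \<le> slev N g M + 1"
proof -
  have N: "0 < N" using assms(1,2) by simp
  have good: "goodS N \<T> g" using BB_good[OF assms(4) assms(1) N assms(3)] by simp
  have "slev N g' T \<le> levi N (midgen N g M)"
    using refine_main[OF assms(6) N] good assms(5,7) by simp
  moreover have "levi N (midgen N g M) \<le> slev N g M + 1"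
  proof -
    note gM = goodS_simplex[OF good assms(5)]
    have "midgen N g M = muS N (g ` M)" using pt_facts[OF gM(1,3,5) N] by simp
    then obtain x where x: "x \<in> g ` M" "levi N (midgen N g M) \<le> levi N x + 1"
      using mu_level_bound[OF gM(7,9) N] by auto
    then obtain v where v: "v \<in> M" "x = g v" by auto
    have "lev N g v \<le> slev N g M" unfolding slev_def using gM(1) v(1) by simp
    then show ?thesis using x v unfolding lev_levi by simp
  qed
  ultimately show ?thesis by simp
qed


end
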